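(* Let $X\sim\mu$ and let $\xi$ be a random vector in $\mathbb{R}^k$ independent of $X$ with $\mathbb{E}[\xi]=0$ and finite variance. Set $Y=h_\Theta(X)+\xi$ where $h_\Theta(x)=\Theta^\top x$, $\Theta\in\mathbb{R}^{d\times k}$, is $\mathcal{G}$-equivariant. Then for all $W\in\mathbb{R}^{d\times k}$, \[R[f_W]-R[f_{\overline W}]:=\mathbb{E}[\|Y-f_W(X)\|_2^2]-\mathbb{E}[\|Y-f_{\overline W}(X)\|_2^2]=\|\Sigma^{1/2}W^\perp\|_F^2,\] where $\overline W=\Psi(W)$, $W^\perp=W-\Psi(W)$ and $\Sigma=\mathbb{E}[XX^\top]$.
   Context: $\mathcal{G}$ is a compact, second countable, Hausdorff topological group with Haar probability measure $\lambda$, with measurable orthogonal representations $\phi$ on $\mathcal{X}=\mathbb{R}^d$ and $\psi$ on $\mathcal{Y}=\mathbb{R}^k$ (both with Euclidean inner product). $\mu$ is a $\mathcal{G}$-invariant probability measure on $\mathbb{R}^d$ such that $\Sigma=\mathbb{E}[XX^\top]$ ($X\sim\mu$) is finite and positive definite. For $W\in\mathbb{R}^{d\times k}$, $f_W(x)=W^\top x$. A map $h:\mathbb{R}^d\to\mathbb{R}^k$ is $\mathcal{G}$-equivariant if $h(\phi(g)x)=\psi(g)h(x)$ for all $g,x$. $\Psi:\mathbb{R}^{d\times k}\to\mathbb{R}^{d\times k}$ is $\Psi(W)=\int_\mathcal{G}\phi(g)W\psi(g^{-1})\,d\lambda(g)$. $\|\cdot\|_F$ is the Frobenius norm. *)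

theory Defs
  imports "HOL-Analysis.Analysis" "HOL-Probability.Probability" "HOL-Algebra.Group"
begin

definition borel_of :: "'a topology \<Rightarrow> 'a measure" where
  "borel_of T = sigma (topspace T) {U. openin T U}"

definition compact_sc_hausdorff_topological_group :: "('g, 'b) monoid_scheme \<Rightarrow> 'g topology \<Rightarrow> bool" where
  "compact_sc_hausdorff_topological_group G T \<longleftrightarrow>
     group G \<and> topspace T = carrier G \<and>
     continuous_map (prod_topology T T) T (\<lambda>(x, y). x \<otimes>\<^bsub>G\<^esub> y) \<and>
     continuous_map T T (\<lambda>x. inv\<^bsub>G\<^esub> x) \<and>
     compact_space T \<and> second_countable T \<and> Hausdorff_space T"

definition haar_probability :: "('g, 'b) monoid_scheme \<Rightarrow> 'g topology \<Rightarrow> 'g measure \<Rightarrow> bool" where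
  "haar_probability G T lam \<longleftrightarrow>
     prob_space lam \<and> sets lam = sets (borel_of T) \<and> space lam = carrier G \<and>
     (\<forall>g \<in> carrier G. \<forall>A \<in> sets lam. measure lam ((\<lambda>x. g \<otimes>\<^bsub>G\<^esub> x) ` A) = measure lam A)"

definition measurable_orthogonal_rep ::
  "('g, 'b) monoid_scheme \<Rightarrow> 'g measure \<Rightarrow> ('g \<Rightarrow> real^'n^'n) \<Rightarrow> bool" where
  "measurable_orthogonal_rep G lam \<phi> \<longleftrightarrow>
     \<phi> \<in> borel_measurable lam \<and>
     (\<forall>g \<in> carrier G. orthogonal_matrix (\<phi> g)) \<and>
     (\<forall>g \<in> carrier G. \<forall>h \<in> carrier G. \<phi> (g \<otimes>\<^bsub>G\<^esub> h) = \<phi> g ** \<phi> h) \<and>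
     \<phi> \<one>\<^bsub>G\<^esub> = mat 1"

definition equivariant ::
  "('g, 'b) monoid_scheme \<Rightarrow> ('g \<Rightarrow> real^'d^'d) \<Rightarrow> ('g \<Rightarrow> real^'k^'k) \<Rightarrow> (real^'d \<Rightarrow> real^'k) \<Rightarrow> bool" where
  "equivariant G \<phi> \<psi> h \<longleftrightarrow> (\<forall>g \<in> carrier G. \<forall>x. h (\<phi> g *v x) = \<psi> g *v h x)"

definition invariant_measure ::
  "('g, 'b) monoid_scheme \<Rightarrow> ('g \<Rightarrow> real^'d^'d) \<Rightarrow> (real^'d) measure \<Rightarrow> bool" where
  "invariant_measure G \<phi> \<mu> \<longleftrightarrow> (\<forall>g \<in> carrier G. distr \<mu> borel (\<lambda>x. \<phi> g *v x) = \<mu>)"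

definition indep_rvs :: "'w measure \<Rightarrow> ('w \<Rightarrow> 'a::topological_space) \<Rightarrow> ('w \<Rightarrow> 'b::topological_space) \<Rightarrow> bool" where
  "indep_rvs M X Z \<longleftrightarrow>
     (\<forall>A \<in> sets borel. \<forall>B \<in> sets borel.
        measure M (X -` A \<inter> Z -` B \<inter> space M) = measure M (X -` A \<inter> space M) * measure M (Z -` B \<inter> space M))"

definition lin_model :: "real^'k^'d \<Rightarrow> real^'d \<Rightarrow> real^'k" where
  "lin_model W x = transpose W *v x"

definition Psi ::
  "('g, 'b) monoid_scheme \<Rightarrow> 'g measure \<Rightarrow> ('g \<Rightarrow> real^'d^'d) \<Rightarrow> ('g \<Rightarrow> real^'k^'k) \<Rightarrow> real^'k^'d \<Rightarrow> real^'k^'d" where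
  "Psi G lam \<phi> \<psi> W = (\<integral>g. \<phi> g ** W ** \<psi> (inv\<^bsub>G\<^esub> g) \<partial>lam)"

definition outer :: "real^'d \<Rightarrow> real^'d \<Rightarrow> real^'d^'d" where
  "outer x y = (\<chi> i j. x $ i * y $ j)"

definition frobenius_norm :: "real^'k^'d \<Rightarrow> real" where
  "frobenius_norm A = sqrt (\<Sum>i\<in>UNIV. \<Sum>j\<in>UNIV. (A $ i $ j)^2)"

definition symmetric_matrix :: "real^'n^'n \<Rightarrow> bool" where
  "symmetric_matrix A \<longleftrightarrow> transpose A = A"

definition psd_matrix :: "real^'n^'n \<Rightarrow> bool" where
  "psd_matrix A \<longleftrightarrow> symmetric_matrix A \<and> (\<forall>x. 0 \<le> x \<bullet> (A *v x))"

definition pd_matrix :: "real^'n^'n \<Rightarrow> bool" where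
  "pd_matrix A \<longleftrightarrow> symmetric_matrix A \<and> (\<forall>x. x \<noteq> 0 \<longrightarrow> 0 < x \<bullet> (A *v x))"

(* the (unique) positive semidefinite square root *)
definition matrix_sqrt :: "real^'n^'n \<Rightarrow> real^'n^'n" where
  "matrix_sqrt A = (THE S. psd_matrix S \<and> S ** S = A)"

end

theory Submission
  imports Defs
begin


lemma outer_mult: "outer x y *v z = (y \<bullet> z) *\<^sub>R x"
  by (simp add: outer_def matrix_vector_mult_def inner_vec_def vec_eq_iff sum_distrib_left mult_ac)

lemma sym_inner:
  fixes A :: "real^'n^'n"
  assumes "transpose A = A" shows "x \<bullet> (A *v y) = (A *v x) \<bullet> y"
  by (metis assms dot_lmul_matrix transpose_matrix_vector)

lemma inner_eq_allI:
  fixes u v :: "real^'n"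
  assumes "\<And>y. u \<bullet> y = v \<bullet> y" shows "u = v"
proof -
  have "(u - v) \<bullet> (u - v) = 0" using assms[of "u - v"] by (simp add: inner_diff_left)
  then show ?thesis by simp
qed

lemma symI:
  fixes A :: "real^'n^'n"
  assumes "\<And>x y. x \<bullet> (A *v y) = (A *v x) \<bullet> y" shows "transpose A = A"
proof -
  have "(transpose A *v x) \<bullet> y = (A *v x) \<bullet> y" for x y
    using assms[of x y] by (simp add: dot_lmul_matrix[symmetric])
  hence "transpose A *v x = A *v x" for x
    by (intro inner_eq_allI) auto
  then show ?thesis by (simp add: matrix_eq)
qed

lemma psd_zero:
  fixes P :: "real^'n^'n"
  assumes sym: "transpose P = P" and V: "subspace V" and psd: "\<And>z. z \<in> V \<Longrightarrow> 0 \<le> z \<bullet> (P *v z)"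
    and x: "x \<in> V" and x0: "x \<bullet> (P *v x) = 0" and y: "y \<in> V"
  shows "y \<bullet> (P *v x) = 0"
proof (rule ccontr)
  define c where "c = y \<bullet> (P *v x)"
  define b where "b = y \<bullet> (P *v y)"
  assume "y \<bullet> (P *v x) \<noteq> 0"
  hence c: "c \<noteq> 0" by (simp add: c_def)
  have b: "b \<ge> 0" using psd[OF y] b_def by simp
  define t where "t = - c / (b + 1)"
  have "x + t *\<^sub>R y \<in> V" using V x y by (simp add: subspace_add subspace_scale)
  hence "0 \<le> (x + t *\<^sub>R y) \<bullet> (P *v (x + t *\<^sub>R y))" by (rule psd)
  also have "\<dots> = x \<bullet> (P *v x) + t * (x \<bullet> (P *v y)) + t * (y \<bullet> (P *v x)) + t * t * (y \<bullet> (P *v y))"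
    by (simp add: matrix_vector_right_distrib matrix_vector_mult_scaleR inner_add_left inner_add_right algebra_simps)
  also have "x \<bullet> (P *v y) = c" unfolding c_def using sym_inner[OF sym, of x y] by (simp add: inner_commute)
  also have "x \<bullet> (P *v x) + t * c + t * (y \<bullet> (P *v x)) + t * t * (y \<bullet> (P *v y)) = c^2 * (- b - 2) / (b+1)^2"
  proof -
    have "b + 1 \<noteq> 0" using b by simp
    then show ?thesis
      unfolding t_def c_def[symmetric] b_def[symmetric] x0
      by (simp add: divide_simps power2_eq_square) (simp add: algebra_simps)
  qed
  also have "\<dots> < 0" using b c by (intro divide_neg_pos mult_pos_neg) auto
  finally show False by simp
qed

lemma max_eigen:
  fixes A :: "real^'n^'n"
  assumes sym: "transpose A = A" and V: "subspace V" and inv: "\<And>x. x \<in> V \<Longrightarrow> A *v x \<in> V"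
    and ne: "V \<noteq> {0}"
  shows "\<exists>x\<in>V. norm x = 1 \<and> A *v x = (x \<bullet> (A *v x)) *\<^sub>R x"
proof -
  let ?S = "sphere 0 1 \<inter> V"
  have cS: "compact ?S" using V by (intro compact_Int_closed closed_subspace) auto
  obtain v where v: "v \<in> V" "v \<noteq> 0" using ne V subspace_0 by blast
  then have "v /\<^sub>R norm v \<in> ?S" using V by (auto simp: subspace_scale)
  hence neS: "?S \<noteq> {}" by blast
  have cont: "continuous_on ?S (\<lambda>z. z \<bullet> (A *v z))"
    by (intro continuous_intros bounded_linear.continuous_on[OF matrix_vector_mul_bounded_linear])
  obtain x where x: "x \<in> ?S" and xmax: "\<And>z. z \<in> ?S \<Longrightarrow> z \<bullet> (A *v z) \<le> x \<bullet> (A *v x)"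
    using continuous_attains_sup[OF cS neS cont] by blast
  define l where "l = x \<bullet> (A *v x)"
  define P where "P = l *\<^sub>R mat 1 - A"
  have Pv: "P *v z = l *\<^sub>R z - A *v z" for z
    by (simp add: P_def matrix_vector_mult_diff_rdistrib scaleR_matrix_vector_assoc[symmetric])
  have symP: "transpose P = P"
    using sym unfolding P_def by (simp add: vec_eq_iff transpose_def mat_def)
  have psdP: "0 \<le> z \<bullet> (P *v z)" if z: "z \<in> V" for z
  proof (cases "z = 0")
    case True then show ?thesis by simp
  next
    case False
    have "z /\<^sub>R norm z \<in> ?S" using z V False by (auto simp: subspace_scale)
    from xmax[OF this] have "(z \<bullet> (A *v z)) / (norm z)^2 \<le> l"
      by (simp add: l_def matrix_vector_mult_scaleR power2_eq_square divide_simps)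
    hence "z \<bullet> (A *v z) \<le> l * (z \<bullet> z)" using False
      by (simp add: divide_le_eq power2_norm_eq_inner)
    then show ?thesis by (simp add: Pv inner_diff_right)
  qed
  have x1: "x \<bullet> x = 1" using x by (simp add: dot_square_norm)
  have x0: "x \<bullet> (P *v x) = 0" by (simp add: Pv inner_diff_right x1 l_def)
  have xV: "x \<in> V" using x by simp
  have PxV: "P *v x \<in> V" unfolding Pv using V inv[OF xV] xV by (simp add: subspace_diff subspace_scale)
  have "(P *v x) \<bullet> (P *v x) = 0" by (rule psd_zero[OF symP V psdP xV x0 PxV])
  hence "P *v x = 0" by simp
  hence "A *v x = l *\<^sub>R x" by (simp add: Pv)
  then show ?thesis using x l_def by auto
qed

lemma spectral_sub:
  fixes A :: "real^'n^'n"
  assumes sym: "transpose A = A"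
  shows "subspace V \<Longrightarrow> (\<forall>x\<in>V. A *v x \<in> V) \<Longrightarrow>
    \<exists>B. B \<subseteq> V \<and> pairwise orthogonal B \<and> (\<forall>b\<in>B. norm b = 1 \<and> (\<exists>l. A *v b = l *\<^sub>R b)) \<and> span B = V"
proof (induction "dim V" arbitrary: V rule: less_induct)
  case less
  show ?case
  proof (cases "V = {0}")
    case True
    then show ?thesis by (intro exI[of _ "{}"]) auto
  next
    case False
    obtain x where x: "x \<in> V" "norm x = 1" "A *v x = (x \<bullet> (A *v x)) *\<^sub>R x"
      using max_eigen[OF sym less.prems(1) _ False] less.prems(2) by blast
    define V' where "V' = V \<inter> {y. x \<bullet> y = 0}"
    have sV': "subspace V'" unfolding V'_def
      by (intro subspace_inter less.prems(1) subspace_hyperplane)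
    have iV': "\<forall>y\<in>V'. A *v y \<in> V'"
    proof
      fix y assume y: "y \<in> V'"
      have "x \<bullet> (A *v y) = (A *v x) \<bullet> y" by (rule sym_inner[OF sym])
      also have "\<dots> = 0" using y by (subst x(3)) (simp add: V'_def)
      finally show "A *v y \<in> V'" using y less.prems(2) by (simp add: V'_def)
    qed
    have x1: "x \<bullet> x = 1" using x by (simp add: dot_square_norm)
    have "x \<notin> V'" using x1 by (simp add: V'_def)
    hence "V' \<subset> V" using x(1) unfolding V'_def by blast
    hence "dim V' < dim V"
      using sV' less.prems(1) by (metis dim_psubset span_eq_iff)
    from less.hyps[OF this sV' iV'] obtain B' where B': "B' \<subseteq> V'" "pairwise orthogonal B'"
      "\<forall>b\<in>B'. norm b = 1 \<and> (\<exists>l. A *v b = l *\<^sub>R b)" "span B' = V'" by blast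
    show ?thesis
    proof (intro exI[of _ "insert x B'"] conjI)
      show "insert x B' \<subseteq> V" using B'(1) x(1) V'_def by auto
      show "pairwise orthogonal (insert x B')"
        using B'(1,2) x1 unfolding pairwise_insert V'_def orthogonal_def
        by (auto simp: inner_commute)
      show "\<forall>b\<in>insert x B'. norm b = 1 \<and> (\<exists>l. A *v b = l *\<^sub>R b)"
        using B'(3) x(2,3) by blast
      show "span (insert x B') = V"
      proof
        show "span (insert x B') \<subseteq> V"
          using B'(1) x(1) less.prems(1) V'_def by (intro span_minimal) auto
        show "V \<subseteq> span (insert x B')"
        proof
          fix v assume v: "v \<in> V"
          have "v - (x \<bullet> v) *\<^sub>R x \<in> V'"
            using v x(1) x1 less.prems(1) by (simp add: V'_def subspace_diff subspace_scale inner_diff_right)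
          hence "v - (x \<bullet> v) *\<^sub>R x \<in> span B'" using B'(4) by simp
          hence "v - (x \<bullet> v) *\<^sub>R x \<in> span (insert x B')" by (meson span_mono subset_insertI subsetD)
          moreover have "(x \<bullet> v) *\<^sub>R x \<in> span (insert x B')" by (simp add: span_base span_scale)
          ultimately have "(v - (x \<bullet> v) *\<^sub>R x) + (x \<bullet> v) *\<^sub>R x \<in> span (insert x B')"
            by (rule span_add)
          then show "v \<in> span (insert x B')" by simp
        qed
      qed
    qed
  qed
qed

lemma matrix_sum_mult: "finite I \<Longrightarrow> (\<Sum>i\<in>I. (M i :: real^'n^'m)) *v x = (\<Sum>i\<in>I. M i *v x)"
  by (induction I rule: finite_induct) (auto simp: matrix_vector_mult_add_rdistrib)

lemma matrix_sqrt_props: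
  fixes A :: "real^'n^'n"
  assumes pd: "pd_matrix A"
  shows "transpose (matrix_sqrt A) = matrix_sqrt A" "matrix_sqrt A ** matrix_sqrt A = A"
proof -
  have sym: "transpose A = A" using pd by (simp add: pd_matrix_def symmetric_matrix_def)
  obtain B where B: "pairwise orthogonal B" "\<And>b. b\<in>B \<Longrightarrow> norm b = 1"
    "\<And>b. b \<in> B \<Longrightarrow> (\<exists>l. A *v b = l *\<^sub>R b)" "span B = UNIV"
    using spectral_sub[OF sym, of UNIV] by auto
  have fin: "finite B" using B(1) by (rule pairwise_orthogonal_imp_finite)
  define ev where "ev b = b \<bullet> (A *v b)" for b
  have b1: "b \<bullet> b = 1" if "b \<in> B" for b using B(2)[OF that] by (simp add: dot_square_norm)
  have evpos: "ev b > 0" if "b \<in> B" for b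
    using pd B(2)[OF that] unfolding pd_matrix_def ev_def by (metis norm_zero zero_neq_one)
  have borth: "b \<bullet> c = 0" if "b \<in> B" "c \<in> B" "b \<noteq> c" for b c
    using B(1) that unfolding pairwise_def orthogonal_def by blast
  define S where "S = (\<Sum>b\<in>B. sqrt (ev b) *\<^sub>R outer b b)"
  have Sv: "S *v y = (\<Sum>b\<in>B. (sqrt (ev b) * (b \<bullet> y)) *\<^sub>R b)" for y
    unfolding S_def matrix_sum_mult[OF fin]
    by (intro sum.cong refl) (simp add: scaleR_matrix_vector_assoc[symmetric] outer_mult)
  have Sc: "S *v c = sqrt (ev c) *\<^sub>R c" if c: "c \<in> B" for c
  proof -
    have "S *v c = (\<Sum>b\<in>B. if b = c then sqrt (ev c) *\<^sub>R c else 0)"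
      unfolding Sv using borth c b1 by (intro sum.cong refl) (auto simp: inner_commute)
    also have "\<dots> = sqrt (ev c) *\<^sub>R c" using fin c by simp
    finally show ?thesis .
  qed
  have Ac: "A *v c = ev c *\<^sub>R c" if c: "c \<in> B" for c
  proof -
    obtain l where l: "A *v c = l *\<^sub>R c" using B(3)[OF c] by blast
    have "ev c = l" unfolding ev_def l using b1[OF c] by simp
    then show ?thesis using l by simp
  qed
  have symS: "transpose S = S"
    by (rule symI) (simp add: Sv inner_sum_left inner_sum_right mult_ac inner_commute)
  have psdS: "psd_matrix S"
    unfolding psd_matrix_def symmetric_matrix_def
  proof (intro conjI allI symS)
    fix x
    have "x \<bullet> (S *v x) = (\<Sum>b\<in>B. sqrt (ev b) * (b \<bullet> x)^2)"
      by (simp add: Sv inner_sum_right power2_eq_square inner_commute mult_ac)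
    also have "\<dots> \<ge> 0" using evpos by (intro sum_nonneg) (simp add: less_imp_le)
    finally show "0 \<le> x \<bullet> (S *v x)" .
  qed
  have SS: "S ** S = A"
  proof -
    have "(S ** S) *v y = A *v y" for y
    proof (rule linear_eq_on_span[of "\<lambda>y. (S ** S) *v y" "\<lambda>y. A *v y" B])
      show "linear ((*v) (S ** S))" "linear ((*v) A)" by simp_all
      show "y \<in> span B" using B(4) by simp
      fix c assume c: "c \<in> B"
      have "(S ** S) *v c = S *v (S *v c)" by (simp add: matrix_vector_mul_assoc)
      also have "\<dots> = (sqrt (ev c) * sqrt (ev c)) *\<^sub>R c" using Sc[OF c] by (simp add: matrix_vector_mult_scaleR)
      also have "\<dots> = A *v c" using evpos[OF c] Ac[OF c] by simp
      finally show "(S ** S) *v c = A *v c" .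
    qed
    then show ?thesis by (simp add: matrix_eq)
  qed
  have uniq: "S' = S" if S': "psd_matrix S'" "S' ** S' = A" for S'
  proof -
    have symS': "transpose S' = S'" using S' by (simp add: psd_matrix_def symmetric_matrix_def)
    have "S' *v y = S *v y" for y
    proof (rule linear_eq_on_span[of "\<lambda>y. S' *v y" "\<lambda>y. S *v y" B])
      show "linear ((*v) S')" "linear ((*v) S)" by simp_all
      show "y \<in> span B" using B(4) by simp
      fix c assume c: "c \<in> B"
      define r where "r = sqrt (ev c)"
      have r: "r > 0" "r * r = ev c" using evpos[OF c] by (auto simp: r_def)
      define w where "w = S' *v c - r *\<^sub>R c"
      have "S' *v w + r *\<^sub>R w = (S' ** S') *v c - (r * r) *\<^sub>R c"
        by (simp add: w_def matrix_vector_mult_scaleR matrix_vector_mul_assoc algebra_simps)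
      also have "\<dots> = 0" using S'(2) Ac[OF c] r by simp
      finally have "w \<bullet> (S' *v w + r *\<^sub>R w) = 0" by simp
      hence "w \<bullet> (S' *v w) + r * (w \<bullet> w) = 0" by (simp add: inner_add_right)
      moreover have "w \<bullet> (S' *v w) \<ge> 0" using S'(1) by (simp add: psd_matrix_def)
      moreover have "w \<bullet> w \<ge> 0" by simp
      ultimately have "r * (w \<bullet> w) = 0" by (smt (verit) r(1) mult_nonneg_nonneg)
      hence "w = 0" using r by simp
      then show "S' *v c = S *v c" using Sc[OF c] by (simp add: w_def r_def)
    qed
    then show ?thesis by (simp add: matrix_eq)
  qed
  have "matrix_sqrt A = S" unfolding matrix_sqrt_def
    using psdS SS by (intro the_equality) (auto intro: uniq)
  then show "transpose (matrix_sqrt A) = matrix_sqrt A" "matrix_sqrt A ** matrix_sqrt A = A"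
    using symS SS by auto
qed




definition tr :: "real^'n^'n \<Rightarrow> real" where "tr A = (\<Sum>i\<in>UNIV. A $ i $ i)"

lemma tr_add: "tr (A + B) = tr A + tr B" by (simp add: tr_def sum.distrib)
lemma tr_diff: "tr (A - B) = tr A - tr B" by (simp add: tr_def sum_subtractf)
lemma tr_transpose: "tr (transpose A) = tr A" by (simp add: tr_def transpose_def)
lemma tr_mult_comm: "tr ((A::real^'m^'n) ** (B::real^'n^'m)) = tr (B ** A)"
  unfolding tr_def matrix_matrix_mult_def by (simp, subst sum.swap) (simp add: mult.commute)

lemma mat_add_rdistrib: "((A::real^'m^'n) + B) ** (C::real^'p^'m) = A ** C + B ** C"
  by (simp add: matrix_matrix_mult_def vec_eq_iff sum.distrib distrib_right)
lemma mat_diff_rdistrib: "((A::real^'m^'n) - B) ** (C::real^'p^'m) = A ** C - B ** C"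
  by (simp add: matrix_matrix_mult_def vec_eq_iff sum_subtractf left_diff_distrib)
lemma mat_diff_ldistrib: "(C::real^'n^'p) ** ((A::real^'m^'n) - B) = C ** A - C ** B"
  by (simp add: matrix_matrix_mult_def vec_eq_iff sum_subtractf right_diff_distrib)
lemma transpose_diff: "transpose ((A::real^'m^'n) - B) = transpose A - transpose B"
  by (simp add: transpose_def vec_eq_iff)
lemma transpose_add: "transpose ((A::real^'m^'n) + B) = transpose A + transpose B"
  by (simp add: transpose_def vec_eq_iff)

lemma norm_sq_tr: "(norm (transpose (U::real^'k^'d) *v x))^2 = tr (transpose U ** outer x x ** U)"
  unfolding power2_norm_eq_inner tr_def
  by (simp add: inner_vec_def matrix_vector_mult_def transpose_def matrix_matrix_mult_def outer_def
      sum_distrib_left sum_distrib_right mult_ac)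

lemma frob_sq: "(frobenius_norm (M::real^'k^'d))^2 = tr (transpose M ** M)"
proof -
  have "(\<Sum>i\<in>UNIV. \<Sum>j\<in>UNIV. (M$i$j)^2) = tr (transpose M ** M)"
    unfolding tr_def matrix_matrix_mult_def transpose_def by (simp, subst sum.swap) (simp add: power2_eq_square)
  moreover have nn: "0 \<le> (\<Sum>i\<in>UNIV. \<Sum>j\<in>UNIV. (M$i$j)^2)" by (intro sum_nonneg) simp
  ultimately show ?thesis unfolding frobenius_norm_def using real_sqrt_pow2[OF nn] by simp
qed

lemma inner_tr: "(transpose (U::real^'k^'d) *v x) \<bullet> y = (\<Sum>l\<in>UNIV. \<Sum>i\<in>UNIV. U $ i $ l * (x $ i * y $ l))"
  by (simp add: inner_vec_def matrix_vector_mult_def transpose_def sum_distrib_right sum_distrib_left mult_ac)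

lemma outer_conj: "outer (A *v x) (A *v x) = (A::real^'n^'n) ** outer x x ** transpose A"
  by (simp add: outer_def matrix_vector_mult_def transpose_def matrix_matrix_mult_def vec_eq_iff
      sum_distrib_left sum_distrib_right mult_ac)

lemma linear_mat_lr: "linear (\<lambda>M. (A::real^'m^'n) ** (M::real^'p^'m) ** (B::real^'q^'p))"
  by (rule linearI) (simp_all add: matrix_add_ldistrib mat_add_rdistrib matrix_scalar_ac scalar_matrix_assoc)

lemma bl_mat_lr: "bounded_linear (\<lambda>M. (A::real^'m^'n) ** (M::real^'p^'m) ** (B::real^'q^'p))"
  using linear_mat_lr linear_conv_bounded_linear by blast

lemma linear_tr: "linear (tr :: real^'n^'n \<Rightarrow> real)"
  by (rule linearI) (simp_all add: tr_def sum.distrib sum_distrib_left)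

lemma bl_tr_lr: "bounded_linear (\<lambda>M. tr ((A::real^'m^'n) ** (M::real^'p^'m) ** (B::real^'n^'p)))"
proof -
  have "linear (\<lambda>M. tr (A ** M ** B))"
    using linear_compose[OF linear_mat_lr linear_tr, of A B] by (simp add: o_def)
  then show ?thesis using linear_conv_bounded_linear by blast
qed

lemma cont_mat_prod: "continuous_on UNIV (\<lambda>p. fst p ** (W::real^'k^'d) ** (snd p :: real^'k^'k) :: real^'k^'d)"
  unfolding matrix_matrix_mult_def
  by (intro continuous_intros)

lemma cont_outer: "continuous_on UNIV (\<lambda>x::real^'d. outer x x)"
  unfolding outer_def by (intro continuous_intros)




lemma borel_of_measurable:
  assumes "continuous_map T T f"
  shows "f \<in> measurable (borel_of T) (borel_of T)"
  unfolding borel_of_def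
proof (rule measurable_measure_of)
  show "{U. openin T U} \<subseteq> Pow (topspace T)" by (auto dest: openin_subset)
  have sp: "space (sigma (topspace T) {U. openin T U}) = topspace T"
    by (rule space_measure_of) (auto dest: openin_subset)
  show "f \<in> space (sigma (topspace T) {U. openin T U}) \<rightarrow> topspace T"
    unfolding sp using assms by (rule continuous_map_funspace)
  fix U assume "U \<in> {U. openin T U}"
  hence "openin T {x \<in> topspace T. f x \<in> U}"
    using assms by (simp add: openin_continuous_map_preimage)
  moreover have "{x \<in> topspace T. f x \<in> U} = f -` U \<inter> topspace T" by blast
  ultimately have "openin T (f -` U \<inter> topspace T)" by simp
  then show "f -` U \<inter> space (sigma (topspace T) {U. openin T U}) \<in> sets (sigma (topspace T) {U. openin T U})"
    unfolding sp by (subst sets_measure_of) (auto dest: openin_subset)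
qed

lemma rep_mult: "measurable_orthogonal_rep G lam \<rho> \<Longrightarrow> g \<in> carrier G \<Longrightarrow> h \<in> carrier G \<Longrightarrow>
   \<rho> (g \<otimes>\<^bsub>G\<^esub> h) = \<rho> g ** \<rho> h"
  by (simp add: measurable_orthogonal_rep_def)

lemma rep_inv:
  assumes rho: "measurable_orthogonal_rep G lam \<rho>" and grp: "group G" and g: "g \<in> carrier G"
  shows "\<rho> (inv\<^bsub>G\<^esub> g) = transpose (\<rho> g)"
proof -
  have ig: "inv\<^bsub>G\<^esub> g \<in> carrier G" using grp g by (simp add: group.inv_closed)
  have 1: "\<rho> g ** \<rho> (inv\<^bsub>G\<^esub> g) = mat 1"
    using rep_mult[OF rho g ig] rho grp g by (simp add: measurable_orthogonal_rep_def group.r_inv)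
  have 2: "transpose (\<rho> g) ** \<rho> g = mat 1"
    using rho g by (simp add: measurable_orthogonal_rep_def orthogonal_matrix)
  have "transpose (\<rho> g) = transpose (\<rho> g) ** (\<rho> g ** \<rho> (inv\<^bsub>G\<^esub> g))" using 1 by simp
  also have "\<dots> = \<rho> (inv\<^bsub>G\<^esub> g)" using 2 by (simp add: matrix_mul_assoc)
  finally show ?thesis by simp
qed

lemma rep_inv_l:
  assumes rho: "measurable_orthogonal_rep G lam \<rho>" and grp: "group G" and g: "g \<in> carrier G"
  shows "\<rho> (inv\<^bsub>G\<^esub> g) ** \<rho> g = mat 1" "\<rho> g ** \<rho> (inv\<^bsub>G\<^esub> g) = mat 1"
   "transpose (\<rho> g) ** \<rho> g = mat 1" "\<rho> g ** transpose (\<rho> g) = mat 1"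
proof -
  have ig: "inv\<^bsub>G\<^esub> g \<in> carrier G" using grp g by (simp add: group.inv_closed)
  show "\<rho> (inv\<^bsub>G\<^esub> g) ** \<rho> g = mat 1"
    using rep_mult[OF rho ig g] rho grp g by (simp add: measurable_orthogonal_rep_def group.l_inv)
  show "\<rho> g ** \<rho> (inv\<^bsub>G\<^esub> g) = mat 1"
    using rep_mult[OF rho g ig] rho grp g by (simp add: measurable_orthogonal_rep_def group.r_inv)
  then show "\<rho> g ** transpose (\<rho> g) = mat 1" using rep_inv[OF rho grp g] by simp
  show "transpose (\<rho> g) ** \<rho> g = mat 1"
    using rho g by (simp add: measurable_orthogonal_rep_def orthogonal_matrix)
qed

lemma norm_orth:
  assumes "transpose Q ** Q = mat 1" "Q ** transpose Q = (mat 1 :: real^'n^'n)"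
  shows "norm Q = sqrt (real CARD('n))"
proof -
  have "Q $ i \<bullet> Q $ i = 1" for i
  proof -
    have "(Q ** transpose Q) $ i $ i = Q $ i \<bullet> Q $ i"
      by (simp add: matrix_matrix_mult_def transpose_def inner_vec_def)
    then show ?thesis using assms(2) by (simp add: mat_def)
  qed
  hence "Q \<bullet> Q = real CARD('n)" by (simp add: inner_vec_def)
  then show ?thesis by (metis norm_eq_sqrt_inner)
qed

locale hsetting =
  fixes G :: "'g monoid" and T :: "'g topology" and lam :: "'g measure"
    and \<phi> :: "'g \<Rightarrow> real^'d^'d" and \<psi> :: "'g \<Rightarrow> real^'k^'k"
  assumes G: "compact_sc_hausdorff_topological_group G T"
    and lam: "haar_probability G T lam"
    and phi: "measurable_orthogonal_rep G lam \<phi>"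
    and psi: "measurable_orthogonal_rep G lam \<psi>"
begin

lemma grp: "group G" using G by (simp add: compact_sc_hausdorff_topological_group_def)
lemma prob: "prob_space lam" using lam by (simp add: haar_probability_def)
lemma sp: "space lam = carrier G" using lam by (simp add: haar_probability_def)
lemma st: "sets lam = sets (borel_of T)" using lam by (simp add: haar_probability_def)
lemma tsp: "topspace T = carrier G" using G by (simp add: compact_sc_hausdorff_topological_group_def)

lemma meas_cont: "continuous_map T T f \<Longrightarrow> f \<in> measurable lam lam"
  using borel_of_measurable measurable_cong_sets[OF st st] by blast

lemma lmult_meas: assumes h: "h \<in> carrier G" shows "(\<lambda>g. h \<otimes>\<^bsub>G\<^esub> g) \<in> measurable lam lam"
proof (rule meas_cont)
  have m: "continuous_map (prod_topology T T) T (\<lambda>(x, y). x \<otimes>\<^bsub>G\<^esub> y)"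
    using G by (simp add: compact_sc_hausdorff_topological_group_def)
  have p: "continuous_map T (prod_topology T T) (\<lambda>g. (h, g))"
    using h tsp by (intro continuous_map_pairedI) (auto simp: id_def[symmetric])
  show "continuous_map T T (\<lambda>g. h \<otimes>\<^bsub>G\<^esub> g)"
    using continuous_map_compose[OF p m] by (simp add: o_def)
qed

lemma inv_meas: "(\<lambda>g. inv\<^bsub>G\<^esub> g) \<in> measurable lam lam"
  using G meas_cont by (simp add: compact_sc_hausdorff_topological_group_def)

lemma phi_meas: "\<phi> \<in> borel_measurable lam" using phi by (simp add: measurable_orthogonal_rep_def)
lemma psi_meas: "\<psi> \<in> borel_measurable lam" using psi by (simp add: measurable_orthogonal_rep_def)

definition F where "F W g = \<phi> g ** W ** \<psi> (inv\<^bsub>G\<^esub> g)"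

lemma F_meas: "F W \<in> borel_measurable lam"
proof -
  have "(\<lambda>g. \<psi> (inv\<^bsub>G\<^esub> g)) \<in> borel_measurable lam"
    using measurable_compose[OF inv_meas psi_meas] by simp
  then show ?thesis unfolding F_def
    using borel_measurable_continuous_Pair[OF phi_meas _ cont_mat_prod[of W]] by simp
qed

lemma F_int: "integrable lam (F W)"
proof -
  let ?K = "cball (0::real^'d^'d) (sqrt CARD('d)) \<times> cball (0::real^'k^'k) (sqrt CARD('k))"
  have "compact ((\<lambda>p. fst p ** W ** snd p) ` ?K)"
    by (intro compact_continuous_image continuous_on_subset[OF cont_mat_prod] compact_Times compact_cball) auto
  hence "bounded ((\<lambda>p. fst p ** W ** snd p) ` ?K)" by (rule compact_imp_bounded)
  then obtain B where B0: "\<forall>x\<in>(\<lambda>p. fst p ** W ** snd p) ` ?K. norm x \<le> B"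
    unfolding bounded_iff by blast
  have B: "\<And>p. p \<in> ?K \<Longrightarrow> norm (fst p ** W ** snd p) \<le> B" using B0 by blast
  have "norm (F W g) \<le> B" if g: "g \<in> space lam" for g
  proof -
    have g': "g \<in> carrier G" using g sp by simp
    have ig: "inv\<^bsub>G\<^esub> g \<in> carrier G" using grp g' by (simp add: group.inv_closed)
    have "norm (\<phi> g) = sqrt CARD('d)" using rep_inv_l[OF phi grp g'] by (intro norm_orth) auto
    moreover have "norm (\<psi> (inv\<^bsub>G\<^esub> g)) = sqrt CARD('k)" using rep_inv_l[OF psi grp ig] by (intro norm_orth) auto
    ultimately show ?thesis using B[of "(\<phi> g, \<psi> (inv\<^bsub>G\<^esub> g))"] by (simp add: F_def)
  qed
  then show ?thesis
    using prob_space.finite_measure[OF prob] F_meas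
    by (intro finite_measure.integrable_const_bound[where B=B]) auto
qed

lemma haar_distr: assumes h: "h \<in> carrier G" shows "distr lam lam (\<lambda>g. h \<otimes>\<^bsub>G\<^esub> g) = lam"
proof (rule measure_eqI)
  interpret group G by (rule grp)
  show "sets (distr lam lam (\<lambda>g. h \<otimes>\<^bsub>G\<^esub> g)) = sets lam" by simp
  fix A assume "A \<in> sets (distr lam lam (\<lambda>g. h \<otimes>\<^bsub>G\<^esub> g))"
  hence A: "A \<in> sets lam" by simp
  have Asub: "A \<subseteq> carrier G" using sets.sets_into_space[OF A] sp by simp
  have ih: "inv\<^bsub>G\<^esub> h \<in> carrier G" using grp h by (simp add: group.inv_closed)
  have pre: "(\<lambda>g. h \<otimes>\<^bsub>G\<^esub> g) -` A \<inter> space lam = (\<lambda>x. inv\<^bsub>G\<^esub> h \<otimes>\<^bsub>G\<^esub> x) ` A"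
  proof
    show "(\<lambda>g. h \<otimes>\<^bsub>G\<^esub> g) -` A \<inter> space lam \<subseteq> (\<lambda>x. inv\<^bsub>G\<^esub> h \<otimes>\<^bsub>G\<^esub> x) ` A"
    proof
      fix g assume "g \<in> (\<lambda>g. h \<otimes>\<^bsub>G\<^esub> g) -` A \<inter> space lam"
      hence g: "h \<otimes>\<^bsub>G\<^esub> g \<in> A" "g \<in> carrier G" using sp by auto
      have "g = inv\<^bsub>G\<^esub> h \<otimes>\<^bsub>G\<^esub> (h \<otimes>\<^bsub>G\<^esub> g)" using g h by (simp add: m_assoc[symmetric])
      then show "g \<in> (\<lambda>x. inv\<^bsub>G\<^esub> h \<otimes>\<^bsub>G\<^esub> x) ` A" using g by blast
    qed
    show "(\<lambda>x. inv\<^bsub>G\<^esub> h \<otimes>\<^bsub>G\<^esub> x) ` A \<subseteq> (\<lambda>g. h \<otimes>\<^bsub>G\<^esub> g) -` A \<inter> space lam"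
    proof
      fix g assume "g \<in> (\<lambda>x. inv\<^bsub>G\<^esub> h \<otimes>\<^bsub>G\<^esub> x) ` A"
      then obtain a where a: "a \<in> A" "g = inv\<^bsub>G\<^esub> h \<otimes>\<^bsub>G\<^esub> a" by blast
      have ac: "a \<in> carrier G" using a Asub by blast
      have "h \<otimes>\<^bsub>G\<^esub> g = a" using a(2) ac h by (simp add: m_assoc[symmetric])
      then show "g \<in> (\<lambda>g. h \<otimes>\<^bsub>G\<^esub> g) -` A \<inter> space lam" using a ac h sp by auto
    qed
  qed
  have "emeasure (distr lam lam (\<lambda>g. h \<otimes>\<^bsub>G\<^esub> g)) A = emeasure lam ((\<lambda>x. inv\<^bsub>G\<^esub> h \<otimes>\<^bsub>G\<^esub> x) ` A)"
    using emeasure_distr[OF lmult_meas[OF h] A] pre by simp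
  also have "\<dots> = ennreal (measure lam ((\<lambda>x. inv\<^bsub>G\<^esub> h \<otimes>\<^bsub>G\<^esub> x) ` A))"
    using prob by (simp add: finite_measure.emeasure_eq_measure prob_space.finite_measure)
  also have "measure lam ((\<lambda>x. inv\<^bsub>G\<^esub> h \<otimes>\<^bsub>G\<^esub> x) ` A) = measure lam A"
    using lam ih A by (simp add: haar_probability_def)
  also have "ennreal (measure lam A) = emeasure lam A"
    using prob by (simp add: finite_measure.emeasure_eq_measure prob_space.finite_measure)
  finally show "emeasure (distr lam lam (\<lambda>g. h \<otimes>\<^bsub>G\<^esub> g)) A = emeasure lam A" .
qed

lemma shift_integral:
  fixes f :: "'g \<Rightarrow> 'b::{banach, second_countable_topology}"
  assumes h: "h \<in> carrier G" and f: "f \<in> borel_measurable lam"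
  shows "(\<integral>g. f (h \<otimes>\<^bsub>G\<^esub> g) \<partial>lam) = (\<integral>g. f g \<partial>lam)"
  using integral_distr[OF lmult_meas[OF h] f] haar_distr[OF h] by simp

end



context hsetting begin

lemma Psi_F: "Psi G lam \<phi> \<psi> W = integral\<^sup>L lam (F W)"
  by (simp add: Psi_def F_def[abs_def])

lemma Psi_equiv: assumes h: "h \<in> carrier G"
  shows "\<phi> h ** Psi G lam \<phi> \<psi> W ** \<psi> (inv\<^bsub>G\<^esub> h) = Psi G lam \<phi> \<psi> W"
proof -
  interpret group G by (rule grp)
  have "\<phi> h ** Psi G lam \<phi> \<psi> W ** \<psi> (inv\<^bsub>G\<^esub> h) = (\<integral>g. \<phi> h ** F W g ** \<psi> (inv\<^bsub>G\<^esub> h) \<partial>lam)"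
    unfolding Psi_F by (rule integral_bounded_linear[OF bl_mat_lr F_int, symmetric])
  also have "\<dots> = (\<integral>g. F W (h \<otimes>\<^bsub>G\<^esub> g) \<partial>lam)"
  proof (rule Bochner_Integration.integral_cong[OF refl])
    fix g assume "g \<in> space lam"
    hence g: "g \<in> carrier G" using sp by simp
    have "F W (h \<otimes>\<^bsub>G\<^esub> g) = \<phi> (h \<otimes>\<^bsub>G\<^esub> g) ** W ** \<psi> (inv\<^bsub>G\<^esub> g \<otimes>\<^bsub>G\<^esub> inv\<^bsub>G\<^esub> h)"
      using g h by (simp add: F_def inv_mult_group)
    also have "\<dots> = \<phi> h ** \<phi> g ** W ** (\<psi> (inv\<^bsub>G\<^esub> g) ** \<psi> (inv\<^bsub>G\<^esub> h))"
      using g h rep_mult[OF phi] rep_mult[OF psi] by simp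
    also have "\<dots> = \<phi> h ** F W g ** \<psi> (inv\<^bsub>G\<^esub> h)"
      by (simp add: F_def matrix_mul_assoc)
    finally show "\<phi> h ** F W g ** \<psi> (inv\<^bsub>G\<^esub> h) = F W (h \<otimes>\<^bsub>G\<^esub> g)" by simp
  qed
  also have "\<dots> = integral\<^sup>L lam (F W)" by (rule shift_integral[OF h F_meas])
  finally show ?thesis unfolding Psi_F .
qed

lemma Psi_eqv: assumes h: "h \<in> carrier G"
  shows "transpose (Psi G lam \<phi> \<psi> W) ** \<phi> h = \<psi> h ** transpose (Psi G lam \<phi> \<psi> W)"
proof -
  define P where "P = Psi G lam \<phi> \<psi> W"
  have e1: "\<phi> h ** P ** transpose (\<psi> h) = P"
    using Psi_equiv[OF h] rep_inv[OF psi grp h] by (simp add: P_def)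
  have e2: "\<phi> h ** P = P ** \<psi> h"
  proof -
    have "P ** \<psi> h = \<phi> h ** P ** (transpose (\<psi> h) ** \<psi> h)"
      by (subst e1[symmetric]) (simp add: matrix_mul_assoc)
    then show ?thesis using rep_inv_l(3)[OF psi grp h] by simp
  qed
  have e3: "transpose P ** transpose (\<phi> h) = transpose (\<psi> h) ** transpose P"
    using arg_cong[OF e2, of transpose] by (simp add: matrix_transpose_mul)
  have "\<psi> h ** transpose P = \<psi> h ** transpose P ** (transpose (\<phi> h) ** \<phi> h)"
    using rep_inv_l(3)[OF phi grp h] by simp
  also have "\<dots> = \<psi> h ** (transpose P ** transpose (\<phi> h)) ** \<phi> h"
    by (simp add: matrix_mul_assoc)
  also have "\<dots> = (\<psi> h ** transpose (\<psi> h)) ** transpose P ** \<phi> h"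
    unfolding e3 by (simp add: matrix_mul_assoc)
  also have "\<dots> = transpose P ** \<phi> h" using rep_inv_l(4)[OF psi grp h] by simp
  finally show ?thesis unfolding P_def by simp
qed

end

lemma Sigma_comm:
  fixes X :: "'w \<Rightarrow> real^'d" and A :: "real^'d^'d"
  assumes M: "prob_space M" and X: "X \<in> borel_measurable M" and X_distr: "distr M borel X = \<mu>"
    and inv: "distr \<mu> borel (\<lambda>x. A *v x) = \<mu>"
    and int: "integrable M (\<lambda>\<omega>. outer (X \<omega>) (X \<omega>))"
    and S: "\<Sigma> = (\<integral>\<omega>. outer (X \<omega>) (X \<omega>) \<partial>M)"
    and orth: "transpose A ** A = mat 1"
  shows "A ** \<Sigma> = \<Sigma> ** A"
proof -
  have mA: "(\<lambda>x. A *v x) \<in> borel_measurable borel"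
    by (intro borel_measurable_continuous_onI bounded_linear.continuous_on[OF matrix_vector_mul_bounded_linear]) auto
  have mo: "(\<lambda>y::real^'d. outer y y) \<in> borel_measurable borel"
    by (rule borel_measurable_continuous_onI[OF cont_outer])
  have "A ** \<Sigma> ** transpose A = (\<integral>\<omega>. A ** outer (X \<omega>) (X \<omega>) ** transpose A \<partial>M)"
    unfolding S by (rule integral_bounded_linear[OF bl_mat_lr int, symmetric])
  also have "\<dots> = (\<integral>\<omega>. outer (A *v X \<omega>) (A *v X \<omega>) \<partial>M)"
    by (simp add: outer_conj)
  also have "\<dots> = (\<integral>y. outer y y \<partial>(distr M borel (\<lambda>\<omega>. A *v X \<omega>)))"
    by (rule integral_distr[symmetric]) (use X mA mo in \<open>auto intro: measurable_compose\<close>)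
  also have "distr M borel (\<lambda>\<omega>. A *v X \<omega>) = distr M borel X"
  proof -
    have "distr M borel (\<lambda>\<omega>. A *v X \<omega>) = distr (distr M borel X) borel (\<lambda>x. A *v x)"
      using distr_distr[OF mA X] by (simp add: o_def)
    then show ?thesis using X_distr inv by simp
  qed
  also have "(\<integral>y. outer y y \<partial>(distr M borel X)) = \<Sigma>"
    unfolding S by (rule integral_distr[OF X mo])
  finally have e: "A ** \<Sigma> ** transpose A = \<Sigma>" .
  have "\<Sigma> ** A = A ** \<Sigma> ** (transpose A ** A)" by (subst e[symmetric]) (simp add: matrix_mul_assoc)
  then show ?thesis using orth by simp
qed

lemma indep_rvs_var:
  fixes X :: "'w \<Rightarrow> real^'d" and Z :: "'w \<Rightarrow> real^'k"
  assumes M: "prob_space M" and X: "X \<in> borel_measurable M" and Z: "Z \<in> borel_measurable M"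
    and ind: "indep_rvs M X Z"
  shows "prob_space.indep_var M borel (\<lambda>\<omega>. X \<omega> $ i) borel (\<lambda>\<omega>. Z \<omega> $ l)"
proof -
  interpret prob_space M by (rule M)
  have sg: "sigma_sets (space M) {Y -` A \<inter> space M | A. A \<in> sets borel} = {Y -` A \<inter> space M | A. A \<in> sets (borel :: real measure)}"
    for Y :: "'w \<Rightarrow> real"
  proof -
    have "{Y -` A \<inter> space M | A. A \<in> sigma_sets UNIV (sets (borel :: real measure))} = sigma_sets (space M) {Y -` A \<inter> space M | A. A \<in> sets borel}"
      by (rule sigma_sets_vimage_commute) auto
    moreover have "sigma_sets UNIV (sets (borel :: real measure)) = sets borel"
      using sets.sigma_sets_eq[of "borel :: real measure"] by simp
    ultimately show ?thesis by simp
  qed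
  have Xi: "(\<lambda>\<omega>. X \<omega> $ i) \<in> borel_measurable M" using measurable_compose[OF X borel_measurable_nth] by simp
  have Zl: "(\<lambda>\<omega>. Z \<omega> $ l) \<in> borel_measurable M" using measurable_compose[OF Z borel_measurable_nth] by simp
  show ?thesis
    unfolding indep_var_eq sg indep_sets2_eq
  proof (intro conjI ballI)
    show "random_variable borel (\<lambda>\<omega>. X \<omega> $ i)" "random_variable borel (\<lambda>\<omega>. Z \<omega> $ l)" using Xi Zl by simp_all
    show "{(\<lambda>\<omega>. X \<omega> $ i) -` A \<inter> space M |A. A \<in> sets borel} \<subseteq> events" using Xi by (auto simp: measurable_sets)
    show "{(\<lambda>\<omega>. Z \<omega> $ l) -` A \<inter> space M |A. A \<in> sets borel} \<subseteq> events" using Zl by (auto simp: measurable_sets)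
    fix a b assume a: "a \<in> {(\<lambda>\<omega>. X \<omega> $ i) -` A \<inter> space M |A. A \<in> sets borel}"
      and b: "b \<in> {(\<lambda>\<omega>. Z \<omega> $ l) -` A \<inter> space M |A. A \<in> sets borel}"
    then obtain A B where AB: "A \<in> sets borel" "B \<in> sets borel" "a = (\<lambda>\<omega>. X \<omega> $ i) -` A \<inter> space M"
      "b = (\<lambda>\<omega>. Z \<omega> $ l) -` B \<inter> space M" by blast
    define A' where "A' = (\<lambda>x::real^'d. x $ i) -` A"
    define B' where "B' = (\<lambda>x::real^'k. x $ l) -` B"
    have A': "A' \<in> sets borel" using measurable_sets[OF borel_measurable_nth AB(1)] by (simp add: A'_def)
    have B': "B' \<in> sets borel" using measurable_sets[OF borel_measurable_nth AB(2)] by (simp add: B'_def)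
    have "a = X -` A' \<inter> space M" "b = Z -` B' \<inter> space M" using AB by (auto simp: A'_def B'_def)
    moreover have "a \<inter> b = X -` A' \<inter> Z -` B' \<inter> space M" using calculation by blast
    ultimately show "prob (a \<inter> b) = prob a * prob b" using ind A' B' by (simp add: indep_rvs_def)
  qed
qed


lemma cross_zero:
  fixes X :: "'w \<Rightarrow> real^'d" and Z :: "'w \<Rightarrow> real^'k"
  assumes M: "prob_space M" and X: "X \<in> borel_measurable M" and Z: "Z \<in> borel_measurable M"
    and ind: "indep_rvs M X Z"
    and SF: "integrable M (\<lambda>\<omega>. outer (X \<omega>) (X \<omega>))"
    and Zi: "integrable M Z" and Z0: "(\<integral>\<omega>. Z \<omega> \<partial>M) = 0"
  shows "integrable M (\<lambda>\<omega>. X \<omega> $ i * Z \<omega> $ l)" "(\<integral>\<omega>. X \<omega> $ i * Z \<omega> $ l \<partial>M) = 0"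
proof -
  interpret prob_space M by (rule M)
  have iv: "indep_var borel (\<lambda>\<omega>. X \<omega> $ i) borel (\<lambda>\<omega>. Z \<omega> $ l)"
    by (rule indep_rvs_var[OF M X Z ind])
  have Xi: "(\<lambda>\<omega>. X \<omega> $ i) \<in> borel_measurable M" using measurable_compose[OF X borel_measurable_nth] by simp
  have bl2: "bounded_linear (\<lambda>A::real^'d^'d. A $ i $ i)"
    using bounded_linear_compose[OF bounded_linear_vec_nth bounded_linear_vec_nth] by blast
  have "integrable M (\<lambda>\<omega>. (outer (X \<omega>) (X \<omega>)) $ i $ i)"
    by (rule integrable_bounded_linear[OF bl2 SF])
  hence "integrable M (\<lambda>\<omega>. (X \<omega> $ i)^2)" by (simp add: outer_def power2_eq_square)
  hence intX: "integrable M (\<lambda>\<omega>. X \<omega> $ i)"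
    by (rule square_integrable_imp_integrable[OF Xi])
  have intZ: "integrable M (\<lambda>\<omega>. Z \<omega> $ l)"
    by (rule integrable_bounded_linear[OF bounded_linear_vec_nth Zi])
  have EZ: "(\<integral>\<omega>. Z \<omega> $ l \<partial>M) = 0"
    using integral_bounded_linear[OF bounded_linear_vec_nth Zi, of l] Z0 by simp
  show "integrable M (\<lambda>\<omega>. X \<omega> $ i * Z \<omega> $ l)"
    by (rule indep_var_integrable[OF iv intX intZ])
  show "(\<integral>\<omega>. X \<omega> $ i * Z \<omega> $ l \<partial>M) = 0"
    using indep_var_lebesgue_integral[OF iv intX intZ] EZ by simp
qed

lemma risk:
  fixes X :: "'w \<Rightarrow> real^'d" and Z :: "'w \<Rightarrow> real^'k" and U :: "real^'k^'d"
  assumes M: "prob_space M" and X: "X \<in> borel_measurable M" and Z: "Z \<in> borel_measurable M"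
    and ind: "indep_rvs M X Z"
    and SF: "integrable M (\<lambda>\<omega>. outer (X \<omega>) (X \<omega>))"
    and S: "\<Sigma> = (\<integral>\<omega>. outer (X \<omega>) (X \<omega>) \<partial>M)"
    and Zi: "integrable M Z" and Z0: "(\<integral>\<omega>. Z \<omega> \<partial>M) = 0"
    and Zv: "integrable M (\<lambda>\<omega>. (norm (Z \<omega>))\<^sup>2)"
  shows "(\<integral>\<omega>. (norm (transpose U *v X \<omega> + Z \<omega>))\<^sup>2 \<partial>M) = tr (transpose U ** \<Sigma> ** U) + (\<integral>\<omega>. (norm (Z \<omega>))\<^sup>2 \<partial>M)"
proof -
  define f1 where "f1 \<omega> = tr (transpose U ** outer (X \<omega>) (X \<omega>) ** U)" for \<omega>
  define f2 where "f2 \<omega> = (\<Sum>l\<in>UNIV. \<Sum>i\<in>UNIV. U $ i $ l * (X \<omega> $ i * Z \<omega> $ l))" for \<omega>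
  have pt: "(norm (transpose U *v X \<omega> + Z \<omega>))\<^sup>2 = f1 \<omega> + 2 * f2 \<omega> + (norm (Z \<omega>))\<^sup>2" for \<omega>
  proof -
    have "(norm (transpose U *v X \<omega> + Z \<omega>))\<^sup>2 = (norm (transpose U *v X \<omega>))\<^sup>2 + 2 * ((transpose U *v X \<omega>) \<bullet> Z \<omega>) + (norm (Z \<omega>))\<^sup>2"
      by (simp add: power2_norm_eq_inner inner_add_left inner_add_right inner_commute)
    then show ?thesis unfolding f1_def f2_def norm_sq_tr inner_tr .
  qed
  have i1: "integrable M f1" unfolding f1_def by (rule integrable_bounded_linear[OF bl_tr_lr SF])
  have e1: "integral\<^sup>L M f1 = tr (transpose U ** \<Sigma> ** U)"
    unfolding f1_def S by (rule integral_bounded_linear[OF bl_tr_lr SF])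
  have i2: "integrable M f2" unfolding f2_def
    by (auto intro!: integrable_sum integrable_mult_right cross_zero(1)[OF M X Z ind SF Zi Z0])
  have e2: "integral\<^sup>L M f2 = 0" unfolding f2_def
    using cross_zero[OF M X Z ind SF Zi Z0]
    by (simp add: integral_sum integrable_sum integrable_mult_right)
  have "(\<integral>\<omega>. (norm (transpose U *v X \<omega> + Z \<omega>))\<^sup>2 \<partial>M) = (\<integral>\<omega>. f1 \<omega> + 2 * f2 \<omega> + (norm (Z \<omega>))\<^sup>2 \<partial>M)"
    by (simp only: pt)
  also have "\<dots> = integral\<^sup>L M f1 + 2 * integral\<^sup>L M f2 + (\<integral>\<omega>. (norm (Z \<omega>))\<^sup>2 \<partial>M)"
    using i1 i2 Zv by (simp add: Bochner_Integration.integral_add integrable_mult_right)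
  finally show ?thesis using e1 e2 by simp
qed


theorem proposition4p6:
  fixes G :: "'g monoid" and T :: "'g topology" and lam :: "'g measure"
    and \<phi> :: "'g \<Rightarrow> real^'d^'d" and \<psi> :: "'g \<Rightarrow> real^'k^'k"
    and M :: "'\<omega> measure" and \<mu> :: "(real^'d) measure"
    and X :: "'\<omega> \<Rightarrow> real^'d" and \<xi> :: "'\<omega> \<Rightarrow> real^'k" and Y :: "'\<omega> \<Rightarrow> real^'k"
    and \<Theta> W :: "real^'k^'d" and \<Sigma> :: "real^'d^'d"
  assumes G: "compact_sc_hausdorff_topological_group G T"
    and lam: "haar_probability G T lam"
    and phi: "measurable_orthogonal_rep G lam \<phi>"
    and psi: "measurable_orthogonal_rep G lam \<psi>"
    and M: "prob_space M"
    and X: "X \<in> borel_measurable M" and X_distr: "distr M borel X = \<mu>"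
    and mu_inv: "invariant_measure G \<phi> \<mu>"
    and Sigma_finite: "integrable M (\<lambda>\<omega>. outer (X \<omega>) (X \<omega>))"
    and Sigma_def: "\<Sigma> = (\<integral>\<omega>. outer (X \<omega>) (X \<omega>) \<partial>M)"
    and Sigma_pd: "pd_matrix \<Sigma>"
    and xi: "\<xi> \<in> borel_measurable M"
    and indep: "indep_rvs M X \<xi>"
    and xi_mean: "integrable M \<xi>" "(\<integral>\<omega>. \<xi> \<omega> \<partial>M) = 0"
    and xi_var: "integrable M (\<lambda>\<omega>. (norm (\<xi> \<omega>))\<^sup>2)"
    and Theta_eq: "equivariant G \<phi> \<psi> (lin_model \<Theta>)"
    and Y_def: "\<And>\<omega>. Y \<omega> = lin_model \<Theta> (X \<omega>) + \<xi> \<omega>"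
  shows "(\<integral>\<omega>. (norm (Y \<omega> - lin_model W (X \<omega>)))\<^sup>2 \<partial>M)
         - (\<integral>\<omega>. (norm (Y \<omega> - lin_model (Psi G lam \<phi> \<psi> W) (X \<omega>)))\<^sup>2 \<partial>M)
       = (frobenius_norm (matrix_sqrt \<Sigma> ** (W - Psi G lam \<phi> \<psi> W)))\<^sup>2"
proof -
  interpret hsetting G T lam \<phi> \<psi> using G lam phi psi by unfold_locales
  interpret grp: group G by (rule grp)
  define P where "P = Psi G lam \<phi> \<psi> W"
  define V where "V = \<Theta> - P"
  define D where "D = W - P"
  have Ssym: "transpose \<Sigma> = \<Sigma>" using Sigma_pd by (simp add: pd_matrix_def symmetric_matrix_def)
  have Theta_m: "transpose \<Theta> ** \<phi> g = \<psi> g ** transpose \<Theta>" if g: "g \<in> carrier G" for g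
  proof -
    have "(transpose \<Theta> ** \<phi> g) *v x = (\<psi> g ** transpose \<Theta>) *v x" for x
      using Theta_eq g by (simp add: equivariant_def lin_model_def matrix_vector_mul_assoc[symmetric])
    then show ?thesis by (simp add: matrix_eq)
  qed
  have Veqv: "transpose V ** \<phi> g = \<psi> g ** transpose V" if g: "g \<in> carrier G" for g
    unfolding V_def transpose_diff mat_diff_rdistrib mat_diff_ldistrib
    using Theta_m[OF g] Psi_eqv[OF g, of W] by (simp add: P_def)
  have Scomm: "\<phi> g ** \<Sigma> = \<Sigma> ** \<phi> g" if g: "g \<in> carrier G" for g
    using mu_inv g rep_inv_l(3)[OF phi grp g]
    by (intro Sigma_comm[OF M X X_distr _ Sigma_finite Sigma_def]) (auto simp: invariant_measure_def)
  have pw: "tr (transpose V ** \<Sigma> ** F W g ** mat 1) = tr (transpose V ** \<Sigma> ** W)" if g: "g \<in> carrier G" for g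
  proof -
    have ig: "inv\<^bsub>G\<^esub> g \<in> carrier G" using g by simp
    have "tr (transpose V ** \<Sigma> ** F W g ** mat 1) = tr ((transpose V ** \<Sigma> ** \<phi> g ** W) ** \<psi> (inv\<^bsub>G\<^esub> g))"
      by (simp add: F_def matrix_mul_assoc)
    also have "\<dots> = tr (\<psi> (inv\<^bsub>G\<^esub> g) ** (transpose V ** \<Sigma> ** \<phi> g ** W))"
      by (rule tr_mult_comm)
    also have "transpose V ** \<Sigma> ** \<phi> g = \<psi> g ** transpose V ** \<Sigma>"
      using Scomm[OF g] Veqv[OF g] by (metis matrix_mul_assoc)
    also have "\<psi> (inv\<^bsub>G\<^esub> g) ** (\<psi> g ** transpose V ** \<Sigma> ** W) = (\<psi> (inv\<^bsub>G\<^esub> g) ** \<psi> g) ** transpose V ** \<Sigma> ** W"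
      by (simp add: matrix_mul_assoc)
    also have "\<dots> = transpose V ** \<Sigma> ** W" using rep_inv_l(1)[OF psi grp g] by simp
    finally show ?thesis .
  qed
  have trP: "tr (transpose V ** \<Sigma> ** P) = tr (transpose V ** \<Sigma> ** W)"
  proof -
    have "tr (transpose V ** \<Sigma> ** P) = tr (transpose V ** \<Sigma> ** P ** mat 1)" by simp
    also have "\<dots> = (\<integral>g. tr (transpose V ** \<Sigma> ** F W g ** mat 1) \<partial>lam)"
      unfolding P_def Psi_F by (rule integral_bounded_linear[OF bl_tr_lr F_int, symmetric])
    also have "\<dots> = (\<integral>g. tr (transpose V ** \<Sigma> ** W) \<partial>lam)"
      using pw sp by (intro Bochner_Integration.integral_cong) auto
    also have "\<dots> = tr (transpose V ** \<Sigma> ** W)"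
      using prob by (simp add: prob_space.prob_space)
    finally show ?thesis .
  qed
  have trVD: "tr (transpose V ** \<Sigma> ** D) = 0"
    unfolding D_def mat_diff_ldistrib tr_diff using trP by simp
  have trDV: "tr (transpose D ** \<Sigma> ** V) = 0"
  proof -
    have "tr (transpose D ** \<Sigma> ** V) = tr (transpose (transpose D ** \<Sigma> ** V))" by (simp add: tr_transpose)
    also have "\<dots> = tr (transpose V ** \<Sigma> ** D)" by (simp add: matrix_transpose_mul Ssym matrix_mul_assoc)
    finally show ?thesis using trVD by simp
  qed
  have res: "(\<integral>\<omega>. (norm (Y \<omega> - lin_model U (X \<omega>)))\<^sup>2 \<partial>M) = tr (transpose (\<Theta> - U) ** \<Sigma> ** (\<Theta> - U)) + (\<integral>\<omega>. (norm (\<xi> \<omega>))\<^sup>2 \<partial>M)" for U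
  proof -
    have "Y \<omega> - lin_model U (X \<omega>) = transpose (\<Theta> - U) *v X \<omega> + \<xi> \<omega>" for \<omega>
      by (simp add: Y_def lin_model_def transpose_diff matrix_vector_mult_diff_rdistrib)
    then show ?thesis
      using risk[OF M X xi indep Sigma_finite Sigma_def xi_mean xi_var, of "\<Theta> - U"] by simp
  qed
  have "\<Theta> - W = V - D" by (simp add: V_def D_def)
  have Q: "tr (transpose (V - D) ** \<Sigma> ** (V - D)) = tr (transpose V ** \<Sigma> ** V) - tr (transpose V ** \<Sigma> ** D) - tr (transpose D ** \<Sigma> ** V) + tr (transpose D ** \<Sigma> ** D)"
    by (simp add: transpose_diff mat_diff_rdistrib mat_diff_ldistrib tr_diff tr_add)
  have rhs: "(frobenius_norm (matrix_sqrt \<Sigma> ** D))\<^sup>2 = tr (transpose D ** \<Sigma> ** D)"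
  proof -
    have "(frobenius_norm (matrix_sqrt \<Sigma> ** D))\<^sup>2 = tr (transpose D ** (transpose (matrix_sqrt \<Sigma>) ** matrix_sqrt \<Sigma>) ** D)"
      by (simp add: frob_sq matrix_transpose_mul matrix_mul_assoc)
    also have "\<dots> = tr (transpose D ** \<Sigma> ** D)" using matrix_sqrt_props[OF Sigma_pd] by simp
    finally show ?thesis .
  qed
  have fin: "tr (transpose (\<Theta> - W) ** \<Sigma> ** (\<Theta> - W)) = tr (transpose V ** \<Sigma> ** V) + tr (transpose D ** \<Sigma> ** D)"
    unfolding \<open>\<Theta> - W = V - D\<close> Q trVD trDV by simp
  show ?thesis
    unfolding res P_def[symmetric] D_def[symmetric] V_def[symmetric] rhs fin by simp
qed

end
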